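(* Let $\alpha\in(0,1)$ and $\phi(x)=x(1-x)^{-\alpha}$, so $\phi_m=m(\alpha)_{m-1}$. Then $\psi(x):=-\phi(-x)=x(1+x)^{-\alpha}$, $x>-1$, is the Laplace exponent of a subordinator whose Lévy measure has infinite total mass. Moreover, for integers $1\le P\le k$, the estimator $\widetilde\gamma:=B_{k,P-1}(\phi_\bullet)/B_{k,P}(\phi_\bullet)$ of the biodiversity parameter $\gamma$ is given explicitly by $$\widetilde\gamma=\frac{P}{k-P+1}\,\frac{(\alpha(P-1))_{k-P+1}}{(\alpha P)_{k-P}}.$$
   Context: $(a)_j=a(a+1)\cdots(a+j-1)$ denotes the Pochhammer symbol, with $(a)_0=1$. For $\phi(x)=\sum_{m\ge1}\phi_mx^m/m!$, the Bell polynomials are $B_{k,p}(\phi_\bullet)=\frac{k!}{p!}[x^k]\phi(x)^p$, with $B_{k,0}(\phi_\bullet)=0$ for $k\ge1$. A Laplace exponent of a subordinator is a function of the form $\psi(x)=cx+\int_0^\infty(1-e^{-xt})\pi(dt)$, with $c\ge0$ and $\pi$ a measure on $(0,\infty)$ such that $\int(1\wedge t)\pi(dt)<\infty$. *)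

theory Defs
  imports "HOL-Probability.Probability" "HOL-Computational_Algebra.Formal_Power_Series"
begin

text \<open>A function psi is the Laplace exponent of a subordinator on the domain D if
  psi(x) = c x + int (1 - exp(-x t)) pi(dt) for all x in D, with c \<ge> 0 and pi a
  Borel measure on (0,\<infinity>) (i.e. no mass on (-\<infinity>,0]) with int (1 min t) pi(dt) < \<infinity>.
  The integral is required to exist (Bochner integrable) for each x in D.
  The measure pi is returned as well, so that properties of it can be stated.\<close>
definition laplace_exponent_with ::
  "real set \<Rightarrow> (real \<Rightarrow> real) \<Rightarrow> real \<Rightarrow> real measure \<Rightarrow> bool" where
  "laplace_exponent_with D \<psi> c \<pi> \<longleftrightarrow>
     c \<ge> 0 \<and> sets \<pi> = sets borel \<and> emeasure \<pi> {..0} = 0 \<and>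
     (\<integral>\<^sup>+ t. ennreal (min 1 t) \<partial>\<pi>) < \<infinity> \<and>
     (\<forall>x\<in>D. integrable \<pi> (\<lambda>t. 1 - exp (- x * t)) \<and>
              \<psi> x = c * x + (\<integral> t. (1 - exp (- x * t)) \<partial>\<pi>))"

definition egf :: "(nat \<Rightarrow> real) \<Rightarrow> real fps" where
  "egf \<phi> = Abs_fps (\<lambda>m. if m = 0 then 0 else \<phi> m / fact m)"

text \<open>Bell polynomial B_{k,p}(phi) = k!/p! [x^k] phi(x)^p (so B_{k,0} = 0 for k \<ge> 1).\<close>
definition bell_poly :: "nat \<Rightarrow> nat \<Rightarrow> (nat \<Rightarrow> real) \<Rightarrow> real" where
  "bell_poly k p \<phi> = fact k / fact p * fps_nth (egf \<phi> ^ p) k"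

text \<open>Coefficients of phi(x) = x (1-x)^(-alpha): phi_m = m (alpha)_{m-1}.\<close>
definition phi_coeff :: "real \<Rightarrow> nat \<Rightarrow> real" where
  "phi_coeff \<alpha> m = of_nat m * pochhammer \<alpha> (m - 1)"

end

theory Submission
  imports Defs "HOL-Real_Asymp.Real_Asymp"
begin


definition gm :: "real \<Rightarrow> real \<Rightarrow> real \<Rightarrow> real" where
  "gm s b t = indicator {0<..} t * (t powr (s-1) * exp (-(b*t)))"

lemma gm_meas[measurable]: "gm s b \<in> borel_measurable borel"
  unfolding gm_def by measurable

lemma gm_nn:
  assumes s: "s > 0" and b: "b > 0"
  shows "(\<integral>\<^sup>+t. ennreal (gm s b t) \<partial>lborel) = ennreal (Gamma s / b powr s)"
proof -
  have "ennreal (Gamma s) = (\<integral>\<^sup>+t. ennreal (indicator {0..} t * t powr (s - 1) / exp t) \<partial>lborel)"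
    using Gamma_conv_nn_integral_real[OF s] by simp
  also have "\<dots> = ennreal b * (\<integral>\<^sup>+x. ennreal (indicator {0..} (0 + b*x) * (0 + b*x) powr (s - 1) / exp (0 + b*x)) \<partial>lborel)"
    using b by (subst nn_integral_real_affine[where c=b and t=0]) auto
  also have "(\<lambda>x. ennreal (indicator {0..} (0 + b*x) * (0 + b*x) powr (s - 1) / exp (0 + b*x))) = (\<lambda>x. ennreal (b powr (s-1)) * ennreal (gm s b x))"
  proof
    fix x
    show "ennreal (indicator {0..} (0 + b*x) * (0 + b*x) powr (s - 1) / exp (0 + b*x)) = ennreal (b powr (s-1)) * ennreal (gm s b x)"
    proof (cases "x > 0")
      case True
      then show ?thesis using b
        by (simp add: gm_def ennreal_mult[symmetric] powr_mult exp_minus field_simps)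
    next
      case False
      then show ?thesis using b
        by (cases "x = 0") (auto simp: gm_def indicator_def zero_le_mult_iff)
    qed
  qed
  also have "ennreal b * (\<integral>\<^sup>+x. ennreal (b powr (s-1)) * ennreal (gm s b x) \<partial>lborel) = ennreal (b powr s) * (\<integral>\<^sup>+x. ennreal (gm s b x) \<partial>lborel)"
  proof -
    have "ennreal b * ennreal (b powr (s-1)) = ennreal (b powr s)"
      using b by (simp add: ennreal_mult[symmetric] powr_diff)
    then show ?thesis
      by (simp add: nn_integral_cmult mult.assoc[symmetric])
  qed
  finally have *: "ennreal (Gamma s) = ennreal (b powr s) * (\<integral>\<^sup>+x. ennreal (gm s b x) \<partial>lborel)" .
  have bp: "b powr s > 0" using b by simp
  show ?thesis
    using * bp by (metis divide_ennreal ennreal_mult_divide_eq ennreal_eq_zero_iff ennreal_neq_top less_le mult.commute Gamma_real_pos s)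
qed

lemma gm_int:
  assumes s: "s > 0" and b: "b > 0"
  shows "has_bochner_integral lborel (gm s b) (Gamma s / b powr s)"
  apply (rule has_bochner_integral_nn_integral)
  using assms gm_nn[OF s b] by (auto simp: gm_def Gamma_real_pos)

lemma lim1:
  fixes x a :: real assumes "x > 0" "0 < a" "a < 1"
  shows "((\<lambda>t. (1 - exp(-x*t)) * t powr (a-1) * exp(-t)) \<longlongrightarrow> 0) (at_right 0)"
  using assms by real_asymp

lemma lim1n:
  fixes x a :: real assumes "x < 0" "0 < a" "a < 1"
  shows "((\<lambda>t. (1 - exp(-x*t)) * t powr (a-1) * exp(-t)) \<longlongrightarrow> 0) (at_right 0)"
  using assms by real_asymp

lemma lim_top:
  fixes a :: real assumes "0 < a" "a < 1"
  shows "filterlim (\<lambda>x. x * (1 + x) powr (- a)) at_top at_top"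
  using assms by real_asymp

lemma lim2:
  fixes x a :: real assumes "x > -1" "0 < a" "a < 1"
  shows "((\<lambda>t. (1 - exp(-x*t)) * t powr (a-1) * exp(-t)) \<longlongrightarrow> 0) at_top"
proof -
  define y where "y = 1 + x"
  have y: "y > 0" using assms y_def by simp
  have "((\<lambda>t. exp(-t) * t powr (a-1) - exp(-(y*t)) * t powr (a-1)) \<longlongrightarrow> 0 - 0) at_top"
    by (intro tendsto_diff) (use y in real_asymp)+
  moreover have "(\<lambda>t. exp(-t) * t powr (a-1) - exp(-(y*t)) * t powr (a-1)) = (\<lambda>t. (1 - exp(-x*t)) * t powr (a-1) * exp(-t))"
    by (rule ext) (simp add: y_def algebra_simps exp_add[symmetric])
  ultimately show ?thesis by simp
qed


definition E :: "real \<Rightarrow> real fps" where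
  "E a = Abs_fps (\<lambda>n. pochhammer a n / fact n)"

lemma E_mult: "E a * E b = E (a + b)"
proof (rule fps_ext)
  fix n
  have V: "(\<Sum>k=0..n. ((-a) gchoose k) * ((-b) gchoose (n - k))) = (-a + -b) gchoose n"
    by (rule gbinomial_Vandermonde)
  have L: "((-a) gchoose k) * ((-b) gchoose (n - k)) = (-1)^n * (pochhammer a k / fact k * (pochhammer b (n-k) / fact (n-k)))"
    if "k \<in> {0..n}" for k
  proof -
    have "(-1::real)^k * (-1)^(n-k) = (-1)^n" using that by (simp add: power_add[symmetric])
    thus ?thesis by (simp add: gbinomial_pochhammer)
  qed
  have "(\<Sum>k=0..n. pochhammer a k / fact k * (pochhammer b (n-k) / fact (n-k))) = pochhammer (a+b) n / fact n"
  proof -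
    have S: "(\<Sum>k=0..n. ((-a) gchoose k) * ((-b) gchoose (n - k))) = (\<Sum>k=0..n. (-1)^n * (pochhammer a k / fact k * (pochhammer b (n-k) / fact (n-k))))"
      by (intro sum.cong refl L)
    have "(-1)^n * (\<Sum>k=0..n. pochhammer a k / fact k * (pochhammer b (n-k) / fact (n-k))) = (-1)^n * (pochhammer (a+b) n / fact n)"
      using V unfolding S by (simp add: sum_distrib_left gbinomial_pochhammer add.commute)
    thus ?thesis by (subst (asm) mult_left_cancel) simp_all
  qed
  thus "fps_nth (E a * E b) n = fps_nth (E (a + b)) n" by (simp add: E_def fps_mult_nth)
qed

lemma E_0: "E 0 = 1"
  by (rule fps_ext) (auto simp: E_def pochhammer_0_left)

lemma E_pow: "E a ^ p = E (real p * a)"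
  by (induction p) (simp_all add: E_0 E_mult algebra_simps)

lemma egf_phi: "egf (phi_coeff a) = fps_X * E a"
proof (rule fps_ext)
  fix n show "fps_nth (egf (phi_coeff a)) n = fps_nth (fps_X * E a) n"
  proof (cases n)
    case (Suc m)
    then show ?thesis by (simp add: egf_def E_def phi_coeff_def fps_X_mult_nth)
  qed (simp add: egf_def fps_X_mult_nth)
qed

lemma bell_phi: "p \<le> k \<Longrightarrow> bell_poly k p (phi_coeff a) = fact k / fact p * (pochhammer (real p * a) (k-p) / fact (k-p))"
  unfolding bell_poly_def egf_phi power_mult_distrib E_pow
  by (simp add: fps_X_power_mult_nth E_def)

lemma part2:
  assumes "0 < (\<alpha>::real)"
  shows "\<forall>k P. 1 \<le> P \<and> P \<le> k \<longrightarrow>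
            bell_poly k (P - 1) (phi_coeff \<alpha>) / bell_poly k P (phi_coeff \<alpha>) =
              real P / real (k - P + 1) *
              (pochhammer (\<alpha> * real (P - 1)) (k - P + 1) / pochhammer (\<alpha> * real P) (k - P))"
proof (intro allI impI)
  fix k P :: nat assume h: "1 \<le> P \<and> P \<le> k"
  then obtain q m where P: "P = Suc q" and k: "k = Suc q + m"
    by (metis Suc_le_D le_Suc_ex One_nat_def)
  have pos: "pochhammer (\<alpha> * real P) m > 0" using assms P
    by (intro pochhammer_pos) auto
  have e1: "k - (P - 1) = Suc m" "k - P = m" "k - P + 1 = Suc m" using P k by auto
  have b1: "bell_poly k (P - 1) (phi_coeff \<alpha>) = fact (Suc q + m) / fact q * (pochhammer (real q * \<alpha>) (Suc m) / fact (Suc m))"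
    using bell_phi[of "P-1" k \<alpha>] P k by simp
  have b2: "bell_poly k P (phi_coeff \<alpha>) = fact (Suc q + m) / fact (Suc q) * (pochhammer (real (Suc q) * \<alpha>) m / fact m)"
    using bell_phi[of P k \<alpha>] P k by simp
  have pos: "pochhammer (real (Suc q) * \<alpha>) m > 0" using assms
    by (intro pochhammer_pos) auto
  have e1: "k - P + 1 = Suc m" "k - P = m" using P k by auto
  show "bell_poly k (P - 1) (phi_coeff \<alpha>) / bell_poly k P (phi_coeff \<alpha>) =
              real P / real (k - P + 1) *
              (pochhammer (\<alpha> * real (P - 1)) (k - P + 1) / pochhammer (\<alpha> * real P) (k - P))"
    unfolding b1 b2 e1 using pos
    apply (simp add: P mult.commute)
    done
qed


definition nu :: "real \<Rightarrow> real \<Rightarrow> real" where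
  "nu a t = exp(-t) * t powr (a-2) * (1-a+t) / Gamma a"

lemma exp_bound:
  fixes x t :: real assumes t: "t \<ge> 0"
  shows "\<bar>1 - exp(-x*t)\<bar> \<le> \<bar>x\<bar> * t * exp(max 0 (-x) * t)"
proof (cases "x \<ge> 0")
  case True
  have "1 + (-x*t) \<le> exp(-x*t)" by (rule exp_ge_add_one_self)
  moreover have "exp(-x*t) \<le> 1" using True t by (simp add: mult_nonneg_nonneg)
  ultimately have "\<bar>1 - exp(-x*t)\<bar> \<le> x * t" by simp
  moreover have "max 0 (-x) = 0" using True by simp
  ultimately show ?thesis using True by simp
next
  case False
  define u where "u = -x*t"
  have u: "u \<ge> 0" using False t u_def by (simp add: mult_nonpos_nonneg)
  have "1 + (-u) \<le> exp(-u)" by (rule exp_ge_add_one_self)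
  hence "exp u * (1 - u) \<le> exp u * exp (-u)" by (intro mult_left_mono) auto
  hence "exp u - u * exp u \<le> 1" by (simp add: exp_minus field_simps)
  moreover have "exp u \<ge> 1" using u by simp
  ultimately show ?thesis using False t u_def by (simp add: abs_if algebra_simps)
qed

lemma main_integral:
  fixes a x :: real
  assumes a: "0 < a" "a < 1" and x: "x > -1"
  shows "integrable lborel (\<lambda>t. indicator {0<..} t * ((1 - exp(-x*t)) * nu a t))"
    and "integral\<^sup>L lborel (\<lambda>t. indicator {0<..} t * ((1 - exp(-x*t)) * nu a t)) = x * (1+x) powr (-a)"
proof -
  define m where "m = max 0 (-x)"
  define b where "b = 1 - m"
  have b: "b > 0" using x by (simp add: b_def m_def)
  have G: "Gamma a > 0" using a by (simp add: Gamma_real_pos)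
  define bnd where "bnd = (\<lambda>t. \<bar>x\<bar> / Gamma a * ((1-a) * gm a b t + gm (a+1) b t))"
  have ibnd: "integrable lborel bnd"
  proof -
    have i1: "integrable lborel (gm a b)" using integrable.intros[OF gm_int[OF a(1) b]] .
    have i2: "integrable lborel (gm (a+1) b)" using integrable.intros[OF gm_int[OF _ b, of "a+1"]] a by simp
    show ?thesis unfolding bnd_def
      using i1 i2 by auto
  qed
  have pw: "norm (indicator {0<..} t * ((1 - exp(-x*t)) * nu a t)) \<le> norm (bnd t)" for t
  proof (cases "t > 0")
    case True
    have p1: "t powr (a-1) = t * t powr (a-2)"
    proof -
      have "t powr (a-1) = t powr (1 + (a-2))" by simp
      also have "\<dots> = t powr 1 * t powr (a-2)" by (rule powr_add)
      finally show ?thesis using True by simp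
    qed
    have p2: "t powr a = t * t * t powr (a-2)"
    proof -
      have "t powr a = t powr (2 + (a-2))" by simp
      also have "\<dots> = t powr 2 * t powr (a-2)" by (rule powr_add)
      finally show ?thesis using True by (simp add: powr_numeral power2_eq_square)
    qed
    have e: "exp (m*t) * exp(-t) = exp(-(b*t))" by (simp add: b_def exp_add[symmetric] algebra_simps)
    have nn: "nu a t \<ge> 0" using True a G by (simp add: nu_def)
    have "norm (indicator {0<..} t * ((1 - exp(-x*t)) * nu a t)) = \<bar>1 - exp(-x*t)\<bar> * nu a t"
      using True nn by (simp add: abs_mult)
    also have "\<dots> \<le> \<bar>x\<bar> * t * exp(m * t) * nu a t"
      using exp_bound[of t x] True nn by (intro mult_right_mono) (auto simp: m_def)
    also have "\<dots> = bnd t"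
      using True G unfolding bnd_def gm_def nu_def p1 p2
      by (simp add: e[symmetric] field_simps p2)
    also have "\<dots> \<le> norm (bnd t)" by simp
    finally show ?thesis .
  qed simp
  show ih: "integrable lborel (\<lambda>t. indicator {0<..} t * ((1 - exp(-x*t)) * nu a t))"
  proof (rule Bochner_Integration.integrable_bound[OF ibnd])
    show "(\<lambda>t. indicator {0<..} t * ((1 - exp(-x*t)) * nu a t)) \<in> borel_measurable lborel"
      unfolding nu_def by measurable
    show "AE t in lborel. norm (indicator {0<..} t * ((1 - exp(-x*t)) * nu a t)) \<le> norm (bnd t)"
      by (rule AE_I2) (rule pw)
  qed
  show "integral\<^sup>L lborel (\<lambda>t. indicator {0<..} t * ((1 - exp(-x*t)) * nu a t)) = x * (1+x) powr (-a)"
  proof -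
    define u0 where "u0 = (\<lambda>t. (1 - exp(-x*t)) * nu a t - x / Gamma a * (t powr (a-1) * exp(-((1+x)*t))))"
    define F where "F = (\<lambda>t. -((1 - exp(-x*t)) * t powr (a-1) * exp(-t)) / Gamma a)"
    define k where "k = (\<lambda>t. x / Gamma a * gm a (1+x) t)"
    have x1: "1 + x > 0" using x by simp
    have hk: "has_bochner_integral lborel k (x / Gamma a * (Gamma a / (1+x) powr a))"
      unfolding k_def by (intro has_bochner_integral_mult_right gm_int a x1)
    have ik: "integrable lborel k" using hk by (rule integrable.intros)
    have kval: "integral\<^sup>L lborel k = x * (1+x) powr (-a)"
      using has_bochner_integral_integral_eq[OF hk] G by (simp add: powr_minus divide_simps)
    have eqf: "(\<lambda>t. indicator (einterval (ereal 0) \<infinity>) t *\<^sub>R u0 t) =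
        (\<lambda>t. indicator {0<..} t * ((1 - exp(-x*t)) * nu a t) - k t)"
      by (rule ext) (simp add: einterval_eq_Ici u0_def k_def gm_def indicator_def algebra_simps)
    have iu: "set_integrable lborel (einterval (ereal 0) \<infinity>) u0"
      unfolding set_integrable_def eqf using ih ik by (rule Bochner_Integration.integrable_diff)
    have D: "(F has_vector_derivative u0 t) (at t)" if t: "ereal 0 < ereal t" "ereal t < \<infinity>" for t
    proof -
      have tp: "t > 0" using t by simp
      have p1: "t powr (a-1) = t * t powr (a-2)"
      proof -
        have "t powr (a-1) = t powr (1 + (a-2))" by simp
        also have "\<dots> = t powr 1 * t powr (a-2)" by (rule powr_add)
        finally show ?thesis using tp by simp
      qed
      have ee: "exp(-((1+x)*t)) = exp(-(x*t)) * exp(-t)" by (simp add: exp_add[symmetric] algebra_simps)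
      have "(F has_real_derivative u0 t) (at t)"
        unfolding F_def u0_def nu_def
        using tp G apply (auto intro!: derivative_eq_intros)
        apply (simp only: p1 ee)
        apply (simp add: field_simps)
        done
      thus ?thesis by (simp add: has_real_derivative_iff_has_vector_derivative)
    qed
    have C: "isCont u0 t" if t: "ereal 0 < ereal t" "ereal t < \<infinity>" for t
      using t G unfolding u0_def nu_def by (auto intro!: continuous_intros)
    have A: "((F \<circ> real_of_ereal) \<longlongrightarrow> 0) (at_right (ereal 0))"
    proof -
      have "((\<lambda>t. (1 - exp(-x*t)) * t powr (a-1) * exp(-t)) \<longlongrightarrow> 0) (at_right 0)"
      proof (cases "x = 0")
        case False
        then show ?thesis using lim1[OF _ a] lim1n[OF _ a] by (cases "x > 0") auto
      qed simp
      then have "(F \<longlongrightarrow> 0) (at_right 0)" unfolding F_def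
        using tendsto_divide[OF tendsto_minus, of _ 0 _ "\<lambda>_. Gamma a" "Gamma a"] G by auto
      thus ?thesis by (simp add: ereal_tendsto_simps1)
    qed
    have B: "((F \<circ> real_of_ereal) \<longlongrightarrow> 0) (at_left \<infinity>)"
    proof -
      have "(F \<longlongrightarrow> 0) at_top" unfolding F_def
        using tendsto_divide[OF tendsto_minus[OF lim2[OF x a]], of "\<lambda>_. Gamma a" "Gamma a"] G by auto
      thus ?thesis by (simp add: ereal_tendsto_simps1)
    qed
    have "(LBINT t=ereal 0..\<infinity>. u0 t) = 0 - 0"
      by (rule interval_integral_FTC_integrable[OF _ D C iu A B]) simp_all
    moreover have "(LBINT t=ereal 0..\<infinity>. u0 t) = integral\<^sup>L lborel (\<lambda>t. indicator {0<..} t * ((1 - exp(-x*t)) * nu a t)) - integral\<^sup>L lborel k"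
      unfolding interval_lebesgue_integral_def set_lebesgue_integral_def
      using eqf ih ik by (simp add: einterval_eq_Ici)
    ultimately show ?thesis using kval by simp
  qed
qed


lemma min_bound:
  fixes t :: real assumes t: "t > 0"
  shows "(1 - exp (-1)) * min 1 t \<le> 1 - exp (- (1 * t))"
proof (cases "t \<ge> 1")
  case True
  then have "exp (-t) \<le> exp (-1)" by simp
  then show ?thesis using True by simp
next
  case False
  have "exp ((1 - t) *\<^sub>R 0 + t *\<^sub>R (-1)) \<le> (1 - t) * exp 0 + t * exp (-1)"
    using False t by (intro convex_onD[OF exp_convex]) auto
  then show ?thesis using False by (simp add: algebra_simps)
qed

lemma part1:
  fixes \<alpha> :: real
  assumes a: "0 < \<alpha>" "\<alpha> < 1"
  shows "\<exists>c \<pi>. laplace_exponent_with {-1<..} (\<lambda>x. x * (1 + x) powr (- \<alpha>)) c \<pi> \<and>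
                 emeasure \<pi> (space \<pi>) = \<infinity>"
proof -
  define w where "w = (\<lambda>t. indicator {0<..} t * nu \<alpha> t)"
  define \<pi> where "\<pi> = density lborel (\<lambda>t. ennreal (w t))"
  have G: "Gamma \<alpha> > 0" using a by (simp add: Gamma_real_pos)
  have wm[measurable]: "w \<in> borel_measurable borel" unfolding w_def nu_def by measurable
  have wnn: "w t \<ge> 0" for t
    using G a by (auto simp: w_def nu_def indicator_def)
  have wm': "(\<lambda>t. ennreal (w t)) \<in> borel_measurable lborel" by measurable
  have sets: "sets \<pi> = sets borel" by (simp add: \<pi>_def)
  have int_eq: "integrable \<pi> (\<lambda>t. 1 - exp (- x * t)) \<and>
      integral\<^sup>L \<pi> (\<lambda>t. 1 - exp (- x * t)) = x * (1+x) powr (-\<alpha>)" if x: "x > -1" for x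
  proof -
    have e: "(\<lambda>t. w t * (1 - exp (- (x * t)))) = (\<lambda>t. indicator {0<..} t * ((1 - exp(-(x*t))) * nu \<alpha> t))"
      by (rule ext) (simp add: w_def)
    show ?thesis unfolding \<pi>_def
      using main_integral[OF a x] wnn
      by (subst integrable_density integral_density; (simp add: e)?)+
  qed
  have emz: "emeasure \<pi> {..0} = 0"
  proof -
    have z: "(\<lambda>t. ennreal (w t) * indicator {..0} t) = (\<lambda>t. 0)"
      by (rule ext) (auto simp: w_def indicator_def)
    show ?thesis unfolding \<pi>_def
      by (subst emeasure_density[OF wm']) (auto simp: z)
  qed
  have fin: "(\<integral>\<^sup>+ t. ennreal (min 1 t) \<partial>\<pi>) < \<infinity>"
  proof -
    define C where "C = 1 / (1 - exp (-1::real))"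
    have C: "C > 0" by (simp add: C_def)
    define h1 where "h1 = (\<lambda>t. indicator {0<..} t * ((1 - exp(-1*t)) * nu \<alpha> t))"
    have ih: "integrable lborel (\<lambda>t. C * h1 t)" unfolding h1_def using main_integral(1)[OF a, of 1] by simp
    have "(\<integral>\<^sup>+ t. ennreal (min 1 t) \<partial>\<pi>) = (\<integral>\<^sup>+ t. ennreal (w t) * ennreal (min 1 t) \<partial>lborel)"
      unfolding \<pi>_def by (subst nn_integral_density) auto
    also have "\<dots> \<le> (\<integral>\<^sup>+ t. ennreal (norm (C * h1 t)) \<partial>lborel)"
    proof (rule nn_integral_mono)
      fix t :: real
      show "ennreal (w t) * ennreal (min 1 t) \<le> ennreal (norm (C * h1 t))"
      proof (cases "t > 0")
        case True
        have nn: "nu \<alpha> t \<ge> 0" using wnn[of t] True by (simp add: w_def)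
        have "min 1 t \<le> C * (1 - exp (- (1 * t)))"
          using min_bound[OF True] by (simp add: C_def field_simps)
        then have "min 1 t * nu \<alpha> t \<le> (C * (1 - exp (- (1 * t)))) * nu \<alpha> t"
          using nn by (rule mult_right_mono)
        then have "w t * min 1 t \<le> C * h1 t"
          using True by (simp add: w_def h1_def mult_ac)
        moreover have "C * h1 t \<le> norm (C * h1 t)" by simp
        ultimately show ?thesis using True wnn[of t]
          by (simp add: ennreal_mult[symmetric])
      qed (simp add: w_def)
    qed
    also have "\<dots> < \<infinity>" using ih[unfolded integrable_iff_bounded] by blast
    finally show ?thesis .
  qed
  have bound: "ennreal (x * (1 + x) powr (- \<alpha>)) \<le> emeasure \<pi> (space \<pi>)" if x: "x > 0" for x
  proof -
    have x1: "x > -1" using x by simp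
    have ae: "AE t in \<pi>. 0 \<le> 1 - exp (- x * t)"
      unfolding \<pi>_def AE_density[OF wm']
    proof (intro AE_I2 impI)
      fix t :: real assume "0 < ennreal (w t)"
      then have t: "t > 0" by (cases "t > 0") (auto simp: w_def)
      have "0 \<le> x * t" using t x by simp
      then have "exp (- x * t) \<le> exp 0" by simp
      then show "0 \<le> 1 - exp (- x * t)" by simp
    qed
    have "ennreal (x * (1 + x) powr (- \<alpha>)) = (\<integral>\<^sup>+ t. ennreal (1 - exp (- x * t)) \<partial>\<pi>)"
      using nn_integral_eq_integral[OF conjunct1[OF int_eq[OF x1]] ae] int_eq[OF x1] by simp
    also have "\<dots> \<le> (\<integral>\<^sup>+ t. 1 \<partial>\<pi>)"
      by (rule nn_integral_mono) simp
    also have "\<dots> = emeasure \<pi> (space \<pi>)" by simp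
    finally show ?thesis .
  qed
  have inf: "emeasure \<pi> (space \<pi>) = \<infinity>"
  proof (rule ccontr)
    assume "emeasure \<pi> (space \<pi>) \<noteq> \<infinity>"
    then obtain M where M: "emeasure \<pi> (space \<pi>) = ennreal M" "M \<ge> 0"
      by (cases "emeasure \<pi> (space \<pi>)" rule: ennreal_cases) auto
    have "eventually (\<lambda>x. x * (1 + x) powr (- \<alpha>) > M) at_top"
      using lim_top[OF a] by (simp add: filterlim_at_top_dense)
    moreover have "eventually (\<lambda>x::real. x > 0) at_top" by (rule eventually_gt_at_top)
    ultimately have "eventually (\<lambda>x::real. x > 0 \<and> x * (1 + x) powr (- \<alpha>) > M) at_top"
      by eventually_elim auto
    then obtain N :: real where N: "\<forall>n\<ge>N. n > 0 \<and> n * (1 + n) powr (- \<alpha>) > M"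
      by (auto simp: eventually_at_top_linorder)
    then obtain x :: real where "x > 0" "x * (1 + x) powr (- \<alpha>) > M"
      by blast
    with bound[of x] M show False
      using ennreal_le_iff[OF M(2)] by (simp add: not_le[symmetric])
  qed
  show ?thesis
  proof (intro exI conjI)
    show "laplace_exponent_with {-1<..} (\<lambda>x. x * (1 + x) powr (- \<alpha>)) 0 \<pi>"
      unfolding laplace_exponent_with_def using sets emz fin int_eq by auto
    show "emeasure \<pi> (space \<pi>) = \<infinity>" by (rule inf)
  qed
qed

theorem corollary15:
  fixes \<alpha> :: real
  assumes "0 < \<alpha>" and "\<alpha> < 1"
  shows "(\<exists>c \<pi>. laplace_exponent_with {-1<..} (\<lambda>x. x * (1 + x) powr (- \<alpha>)) c \<pi> \<and>
                 emeasure \<pi> (space \<pi>) = \<infinity>) \<and>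
         (\<forall>k P. 1 \<le> P \<and> P \<le> k \<longrightarrow>
            bell_poly k (P - 1) (phi_coeff \<alpha>) / bell_poly k P (phi_coeff \<alpha>) =
              real P / real (k - P + 1) *
              (pochhammer (\<alpha> * real (P - 1)) (k - P + 1) / pochhammer (\<alpha> * real P) (k - P)))"
  using part1[OF assms] part2[OF assms(1)] by blast

end
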